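(* Let $\mathcal M,\widehat{\mathcal M}\subset\mathbb R^D$ be closed embedded submanifolds with $\mathrm{reach}(\mathcal M)\ge\zeta_{\min}$, $\mathrm{reach}(\widehat{\mathcal M})\ge\zeta_{\min}$ and $d_H(\mathcal M,\widehat{\mathcal M})\le\varepsilon$, for some $\zeta_{\min}>0$ and $\varepsilon\in(0,\zeta_{\min}/4)$. Fix $r\in(0,\zeta_{\min}-2\varepsilon)$ and let $\pi,\hat\pi$ be the nearest-point projections onto $\mathcal M$ and $\widehat{\mathcal M}$ on $\mathcal T_{\zeta_{\min}}(\mathcal M)$ and $\mathcal T_{\zeta_{\min}}(\widehat{\mathcal M})$ respectively. Then for every $x\in\mathcal T_r(\mathcal M)$, both $\pi(x)$ and $\hat\pi(x)$ are well defined and \[\|\pi(x)-\hat\pi(x)\|\le\varepsilon+2\sqrt{\frac{\operatorname{dist}(x,\mathcal M)\varepsilon+\varepsilon^2}{1-(\operatorname{dist}(x,\mathcal M)+\varepsilon)/\zeta_{\min}}}.\] Consequently $\sup_{x\in\mathcal T_r(\mathcal M)}\|\pi(x)-\hat\pi(x)\|\le\varepsilon+2\sqrt{\frac{r\varepsilon+\varepsilon^2}{1-(r+\varepsilon)/\zeta_{\min}}}\lesssim_{\zeta_{\min},r}\sqrt\varepsilon$.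
   Context: Reach: largest $r$ such that every point at distance $<r$ has a unique nearest point. $\mathcal T_r(\mathcal M):=\{x:\operatorname{dist}(x,\mathcal M)<r\}$. $d_H$ is the Hausdorff distance. *)

theory Defs
  imports "HOL-Analysis.Analysis"
begin

text \<open>C-infinity smoothness of a map between Euclidean spaces on an open set U:
  there is a family D of iterated directional derivatives (D [] = f), each of which is
  Frechet differentiable on U, the derivative of D vs at x being h \<mapsto> D (h # vs) x.\<close>
definition smooth_on :: "('a::euclidean_space \<Rightarrow> 'b::euclidean_space) \<Rightarrow> 'a set \<Rightarrow> bool" where
  "smooth_on f U \<longleftrightarrow> (\<exists>D :: 'a list \<Rightarrow> 'a \<Rightarrow> 'b. (\<forall>x\<in>U. D [] x = f x) \<and>
      (\<forall>vs. \<forall>x\<in>U. (D vs has_derivative (\<lambda>h. D (h # vs) x)) (at x)))"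

definition embedded_submanifold :: "'a::euclidean_space set \<Rightarrow> bool" where
  "embedded_submanifold M \<longleftrightarrow> (\<exists>d. \<forall>p\<in>M. \<exists>U V (\<phi>::'a \<Rightarrow> 'a) \<psi> L.
      open U \<and> p \<in> U \<and> open V \<and> \<phi> ` U = V \<and> \<psi> ` V = U \<and>
      (\<forall>x\<in>U. \<psi> (\<phi> x) = x) \<and> (\<forall>y\<in>V. \<phi> (\<psi> y) = y) \<and>
      smooth_on \<phi> U \<and> smooth_on \<psi> V \<and>
      subspace L \<and> dim L = d \<and> \<phi> ` (U \<inter> M) = V \<inter> L)"

definition reach :: "'a::euclidean_space set \<Rightarrow> ereal" where
  "reach M = Sup {ereal r | r. r \<ge> 0 \<and>
      (\<forall>x. infdist x M < r \<longrightarrow> (\<exists>!p. p \<in> M \<and> dist x p = infdist x M))}"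

definition tube :: "real \<Rightarrow> 'a::euclidean_space set \<Rightarrow> 'a set" where
  "tube r M = {x. infdist x M < r}"

text \<open>Nearest-point projection (meaningful where the nearest point is unique).\<close>
definition proj :: "'a::euclidean_space set \<Rightarrow> 'a \<Rightarrow> 'a" where
  "proj M x = (THE p. p \<in> M \<and> dist x p = infdist x M)"

definition hausdorff_dist :: "'a::euclidean_space set \<Rightarrow> 'a set \<Rightarrow> ereal" where
  "hausdorff_dist A B = max (SUP a\<in>A. ereal (infdist a B)) (SUP b\<in>B. ereal (infdist b A))"

end

theory Submission
  imports Defs
begin


lemma reach_unique:
  fixes M :: "'a::euclidean_space set"
  assumes "reach M \<ge> ereal \<zeta>" "infdist x M < \<zeta>"
  shows "\<exists>!p. p \<in> M \<and> dist x p = infdist x M"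
proof -
  have "ereal (infdist x M) < ereal \<zeta>" using assms(2) by simp
  then have "ereal (infdist x M) < reach M" using assms(1) by (rule order_less_le_trans)
  then obtain s where s: "ereal (infdist x M) < s" "s \<in> {ereal r | r. r \<ge> 0 \<and>
      (\<forall>x. infdist x M < r \<longrightarrow> (\<exists>!p. p \<in> M \<and> dist x p = infdist x M))}"
    unfolding reach_def less_Sup_iff by blast
  then show ?thesis by auto
qed

lemma seg_nearest:
  fixes M :: "'a::euclidean_space set"
  assumes cl: "closed M" and ne: "M \<noteq> {}" and b: "b \<in> M" "dist w b = infdist w M"
    and l: "0 \<le> l" "l \<le> 1"
  shows "infdist (b + l *\<^sub>R (w - b)) M = l * dist w b"
proof -
  let ?z = "b + l *\<^sub>R (w - b)"
  have zb: "dist ?z b = l * dist w b" using l by (simp add: dist_norm)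
  have wz: "dist w ?z = (1 - l) * dist w b"
  proof -
    have "w - ?z = (1 - l) *\<^sub>R (w - b)" by (simp add: algebra_simps)
    then show ?thesis using l by (simp add: dist_norm)
  qed
  obtain y where y: "y \<in> M" "infdist ?z M = dist ?z y" using infdist_attains_inf[OF cl ne] by blast
  have "infdist w M \<le> dist w y" using y infdist_le by blast
  also have "\<dots> \<le> dist w ?z + dist ?z y" by (rule dist_triangle)
  finally have "l * dist w b \<le> infdist ?z M" using wz y b by (simp add: algebra_simps)
  moreover have "infdist ?z M \<le> l * dist w b" using infdist_le[OF b(1), of ?z] zb by simp
  ultimately show ?thesis by linarith
qed

lemma proj_prop:
  assumes "\<exists>!b. b \<in> M \<and> dist w b = infdist w M"
  shows "proj M w \<in> M \<and> dist w (proj M w) = infdist w M"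
  unfolding proj_def using theI'[OF assms] .

lemma proj_eq:
  assumes "\<exists>!b. b \<in> M \<and> dist w b = infdist w M" "b \<in> M" "dist w b = infdist w M"
  shows "proj M w = b"
  unfolding proj_def using assms by (metis (mono_tags, lifting) the1_equality)

lemma proj_cont:
  fixes M :: "'a::euclidean_space set"
  assumes cl: "closed M" and ne: "M \<noteq> {}" and S: "compact S"
    and u: "\<forall>w\<in>S. \<exists>!b. b \<in> M \<and> dist w b = infdist w M"
  shows "continuous_on S (proj M)"
proof -
  obtain a0 where a0: "a0 \<in> M" using ne by blast
  obtain R where R: "\<forall>x\<in>S. norm x \<le> R" using compact_imp_bounded[OF S] bounded_pos by blast
  define T where "T = M \<inter> cball 0 (2 * R + norm a0)"
  have cT: "compact T" unfolding T_def by (simp add: cl closed_Int_compact)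
  have pr: "\<And>w. w \<in> S \<Longrightarrow> proj M w \<in> M \<and> dist w (proj M w) = infdist w M"
    using u proj_prop by blast
  have fim: "proj M \<in> S \<rightarrow> T"
  proof
    fix w assume w: "w \<in> S"
    have "norm (proj M w) \<le> norm w + dist w (proj M w)"
      by (metis dist_norm norm_minus_commute norm_triangle_sub)
    also have "\<dots> = norm w + infdist w M" using pr[OF w] by simp
    also have "\<dots> \<le> norm w + dist w a0" using infdist_le[OF a0] by simp
    also have "\<dots> \<le> 2 * norm w + norm a0"
      by (smt (verit) dist_norm norm_triangle_ineq4)
    also have "\<dots> \<le> 2 * R + norm a0" using R w by auto
    finally show "proj M w \<in> T" unfolding T_def using pr[OF w] by simp
  qed
  have geq: "(\<lambda>x. Pair x (proj M x)) ` S = (S \<times> T) \<inter> {z. dist (fst z) (snd z) = infdist (fst z) M}"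
  proof
    show "(\<lambda>x. Pair x (proj M x)) ` S \<subseteq> (S \<times> T) \<inter> {z. dist (fst z) (snd z) = infdist (fst z) M}"
      using fim pr by auto
    show "(S \<times> T) \<inter> {z. dist (fst z) (snd z) = infdist (fst z) M} \<subseteq> (\<lambda>x. Pair x (proj M x)) ` S"
    proof clarify
      fix w b assume h: "w \<in> S" "b \<in> T" "dist (fst (w, b)) (snd (w, b)) = infdist (fst (w, b)) M"
      have "proj M w = b" using proj_eq[where w=w and M=M and b=b] u h T_def by auto
      then show "(w, b) \<in> (\<lambda>x. Pair x (proj M x)) ` S" using h by force
    qed
  qed
  have "closed {z::'a\<times>'a. dist (fst z) (snd z) = infdist (fst z) M}"
    by (intro closed_Collect_eq continuous_intros)
  then have "closedin (top_of_set (S \<times> T)) ((\<lambda>x. Pair x (proj M x)) ` S)"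
    unfolding geq by (rule closedin_closed_Int)
  then show ?thesis using continuous_closed_graph_eq[OF cT fim] by simp
qed

lemma ex1_eq: "\<exists>!x. P x \<Longrightarrow> P a \<Longrightarrow> P b \<Longrightarrow> a = b" by blast

lemma ray_step:
  fixes M :: "'a::euclidean_space set" and p u :: 'a
  assumes cl: "closed M" and ne: "M \<noteq> {}"
    and uq: "\<forall>w. infdist w M < \<zeta> \<longrightarrow> (\<exists>!b. b \<in> M \<and> dist w b = infdist w M)"
    and pM: "p \<in> M" and nu: "norm u = 1" and eta: "0 < \<eta>" "2 * \<eta> \<le> t" "t + \<eta> < \<zeta>"
    and hz: "infdist (p + t *\<^sub>R u) M = t"
  shows "infdist (p + (t + \<eta>) *\<^sub>R u) M = t + \<eta>"
proof -
  define z where "z = p + t *\<^sub>R u"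
  define S where "S = cball z \<eta>"
  have tpos: "0 < t" using eta by linarith
  have dz: "dist z p = t" using nu tpos by (simp add: z_def dist_norm)
  have iz: "infdist z M = t" using hz z_def by simp
  have bnd: "\<eta> \<le> infdist w M \<and> infdist w M < \<zeta>" if w: "w \<in> S" for w
  proof -
    have dw: "dist z w \<le> \<eta>" using w S_def by simp
    have "infdist z M \<le> infdist w M + dist z w" by (rule infdist_triangle)
    moreover have "infdist w M \<le> infdist z M + dist w z" by (rule infdist_triangle)
    ultimately show ?thesis using dw iz eta by (simp add: dist_commute)
  qed
  have uS: "\<forall>w\<in>S. \<exists>!b. b \<in> M \<and> dist w b = infdist w M" using bnd uq by blast
  have pr: "proj M w \<in> M \<and> dist w (proj M w) = infdist w M" if "w \<in> S" for w
    using uS that proj_prop by blast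
  have cS: "compact S" unfolding S_def by simp
  have cont: "continuous_on S (proj M)" by (rule proj_cont[OF cl ne cS uS])
  have nz: "norm (w - proj M w) \<noteq> 0" if "w \<in> S" for w
  proof -
    have "norm (w - proj M w) = infdist w M" using pr[OF that] by (simp add: dist_norm)
    then show ?thesis using bnd[OF that] eta by simp
  qed
  define F where "F w = z + \<eta> *\<^sub>R ((w - proj M w) /\<^sub>R norm (w - proj M w))" for w
  have contF: "continuous_on S F" unfolding F_def
    by (intro continuous_intros cont) (use nz in auto)
  have fim: "F \<in> S \<rightarrow> S"
  proof
    fix w assume w: "w \<in> S"
    have "dist z (F w) = \<eta>" using nz[OF w] eta by (simp add: F_def dist_norm)
    then show "F w \<in> S" unfolding S_def by simp
  qed
  obtain w where w: "w \<in> S" "F w = w"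
    using brouwer[OF cS _ _ contF fim] S_def eta by auto
  define b where "b = proj M w"
  define \<delta> where "\<delta> = infdist w M"
  define \<nu> where "\<nu> = (w - b) /\<^sub>R \<delta>"
  have bM: "b \<in> M" and db: "dist w b = \<delta>" using pr[OF w(1)] b_def \<delta>_def by auto
  have dpos: "\<eta> \<le> \<delta>" using bnd[OF w(1)] \<delta>_def by simp
  have nwb: "norm (w - b) = \<delta>" using db by (simp add: dist_norm)
  have weq: "w = z + \<eta> *\<^sub>R \<nu>" using w(2) unfolding F_def \<nu>_def b_def \<delta>_def
    using pr[OF w(1)] by (simp add: dist_norm)
  have wb: "w - b = \<delta> *\<^sub>R \<nu>" using dpos eta by (simp add: \<nu>_def)
  define l where "l = (\<delta> - \<eta>) / \<delta>"
  have l: "0 \<le> l" "l \<le> 1" using dpos eta by (auto simp: l_def field_simps)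
  have zeq: "z = b + (\<delta> - \<eta>) *\<^sub>R \<nu>"
    using weq wb by (simp add: algebra_simps)
  have zeq2: "z = b + l *\<^sub>R (w - b)"
    using zeq wb dpos eta by (simp add: l_def)
  have iz2: "infdist z M = \<delta> - \<eta>"
  proof -
    have hb: "dist w b = infdist w M" using db \<delta>_def by simp
    have "infdist z M = l * \<delta>" using seg_nearest[OF cl ne bM hb l] db zeq2 by simp
    then show ?thesis using dpos eta by (simp add: l_def)
  qed
  have nnu: "norm \<nu> = 1" using nwb dpos eta by (simp add: \<nu>_def)
  have dzb: "dist z b = \<delta> - \<eta>"
    using zeq dpos nnu by (simp add: dist_norm)
  have "infdist z M < \<zeta>" using iz eta by simp
  then have "\<exists>!b. b \<in> M \<and> dist z b = infdist z M" using uq by blast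
  moreover have "b \<in> M \<and> dist z b = infdist z M" using bM dzb iz2 by simp
  moreover have "p \<in> M \<and> dist z p = infdist z M" using pM dz iz by simp
  ultimately have bp: "b = p" by (rule ex1_eq)
  have tde: "t = \<delta> - \<eta>" using iz iz2 by simp
  have "p + t *\<^sub>R u = p + t *\<^sub>R \<nu>" using zeq z_def bp tde by metis
  then have "t *\<^sub>R u = t *\<^sub>R \<nu>" by (rule add_left_imp_eq)
  then have unu: "u = \<nu>" using tpos by simp
  have "w = p + (t + \<eta>) *\<^sub>R u" using weq z_def unu by (simp add: algebra_simps)
  then have "infdist (p + (t + \<eta>) *\<^sub>R u) M = \<delta>" unfolding \<delta>_def by simp
  also have "\<delta> = t + \<eta>" using tde by simp
  finally show ?thesis .
qed

lemma ray_extend: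
  fixes M :: "'a::euclidean_space set" and p u :: 'a
  assumes cl: "closed M" and ne: "M \<noteq> {}"
    and uq: "\<forall>w. infdist w M < \<zeta> \<longrightarrow> (\<exists>!b. b \<in> M \<and> dist w b = infdist w M)"
    and pM: "p \<in> M" and nu: "norm u = 1" and d: "0 < d" "d \<le> T" "T < \<zeta>"
    and hd: "infdist (p + d *\<^sub>R u) M = d"
  shows "infdist (p + T *\<^sub>R u) M = T"
proof -
  define m where "m = min d (\<zeta> - T)"
  have m1: "m \<le> \<zeta> - T" "m \<le> d" "0 < m" using d unfolding m_def by auto
  define \<eta> where "\<eta> = m / 2"
  have e1: "0 < \<eta>" using m1(3) unfolding \<eta>_def by simp
  have e2: "2 * \<eta> \<le> d" using m1(2) unfolding \<eta>_def by simp
  have e3: "T + \<eta> < \<zeta>" using m1(1,3) unfolding \<eta>_def by simp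
  note eta = e1 e2 e3
  have claim: "\<forall>t. d \<le> t \<and> t \<le> T \<and> t \<le> d + real n * \<eta> \<longrightarrow> infdist (p + t *\<^sub>R u) M = t" for n
  proof (induction n)
    case 0
    then show ?case using hd by auto
  next
    case (Suc n)
    show ?case
    proof (intro allI impI)
      fix t assume t: "d \<le> t \<and> t \<le> T \<and> t \<le> d + real (Suc n) * \<eta>"
      show "infdist (p + t *\<^sub>R u) M = t"
      proof (cases "t \<le> d + real n * \<eta>")
        case True
        then show ?thesis using Suc.IH t by blast
      next
        case False
        define t' where "t' = max d (t - \<eta>)"
        define e where "e = t - t'"
        have t'1: "d \<le> t' \<and> t' \<le> T \<and> t' \<le> d + real n * \<eta>"
          using t False eta by (auto simp: t'_def algebra_simps)
        have ht': "infdist (p + t' *\<^sub>R u) M = t'" using Suc.IH t'1 by blast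
        have nn: "0 \<le> real n * \<eta>" using eta by simp
        have dt: "d < t" using False nn by linarith
        have t'ge: "d \<le> t'" "t - \<eta> \<le> t'" by (simp_all add: t'_def)
        have t'lt: "t' < t" using dt eta(1) by (simp add: t'_def)
        have e: "0 < e" "2 * e \<le> t'" "t' + e < \<zeta>"
        proof -
          have tT: "t \<le> T" using t by simp
          show "0 < e" using t'lt unfolding e_def by linarith
          have a1: "t - t' \<le> \<eta>" using t'ge(2) by linarith
          have a2: "2 * (t - t') \<le> 2 * \<eta>" using a1 by (intro mult_left_mono) auto
          show "2 * e \<le> t'" using a2 eta(2) t'ge(1) unfolding e_def by linarith
          show "t' + e < \<zeta>" using tT eta unfolding e_def by linarith
        qed
        have "infdist (p + (t' + e) *\<^sub>R u) M = t' + e"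
          by (rule ray_step[OF cl ne uq pM nu e ht'])
        then show ?thesis by (simp add: e_def)
      qed
    qed
  qed
  obtain n where n: "(T - d) / \<eta> < real n" using reals_Archimedean2 by blast
  have "T \<le> d + real n * \<eta>" using n eta by (simp add: field_simps)
  then show ?thesis using claim d by blast
qed

lemma federer:
  fixes M :: "'a::euclidean_space set" and p u :: 'a
  assumes cl: "closed M" and ne: "M \<noteq> {}"
    and uq: "\<forall>w. infdist w M < \<zeta> \<longrightarrow> (\<exists>!b. b \<in> M \<and> dist w b = infdist w M)"
    and pM: "p \<in> M" and nu: "norm u = 1" and d: "0 < d" "d \<le> T" "T < \<zeta>"
    and hd: "infdist (p + d *\<^sub>R u) M = d" and y: "y \<in> M"
  shows "2 * T * (u \<bullet> (y - p)) \<le> (norm (y - p))\<^sup>2"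
proof -
  have "T = infdist (p + T *\<^sub>R u) M" using ray_extend[OF assms(1-9)] by simp
  also have "\<dots> \<le> norm (p + T *\<^sub>R u - y)" using infdist_le[OF y] by (simp add: dist_norm)
  also have "p + T *\<^sub>R u - y = T *\<^sub>R u - (y - p)" by (simp add: algebra_simps)
  finally have "T \<le> norm (T *\<^sub>R u - (y - p))" .
  then have "T\<^sup>2 \<le> (norm (T *\<^sub>R u - (y - p)))\<^sup>2" using d by (intro power_mono) auto
  moreover have "(norm (T *\<^sub>R u - (y - p)))\<^sup>2 = T\<^sup>2 - 2 * T * (u \<bullet> (y - p)) + (norm (y - p))\<^sup>2"
  proof -
    have "(T *\<^sub>R u) \<bullet> (y - p) = T * (u \<bullet> (y - p))" by simp
    moreover have "norm (T *\<^sub>R u) = T" using nu d by simp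
    ultimately show ?thesis using dot_norm_neg[of "T *\<^sub>R u" "y - p"] by (simp add: field_simps)
  qed
  ultimately show ?thesis by simp
qed



lemma pointwise:
  fixes M Mh :: "'a::euclidean_space set" and x :: 'a
  assumes clM: "closed M" and neM: "M \<noteq> {}" and clMh: "closed Mh" and neMh: "Mh \<noteq> {}"
    and z: "0 < \<zeta>"
    and uqM: "\<forall>w. infdist w M < \<zeta> \<longrightarrow> (\<exists>!b. b \<in> M \<and> dist w b = infdist w M)"
    and uqMh: "\<forall>w. infdist w Mh < \<zeta> \<longrightarrow> (\<exists>!b. b \<in> Mh \<and> dist w b = infdist w Mh)"
    and hM: "\<forall>a\<in>M. infdist a Mh \<le> \<epsilon>" and hMh: "\<forall>b\<in>Mh. infdist b M \<le> \<epsilon>"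
    and e: "0 < \<epsilon>" and dx: "infdist x M + 2 * \<epsilon> < \<zeta>"
  shows "infdist x Mh < \<zeta> \<and> norm (proj M x - proj Mh x) \<le>
     \<epsilon> + 2 * sqrt ((infdist x M * \<epsilon> + \<epsilon>\<^sup>2) / (1 - (infdist x M + \<epsilon>) / \<zeta>))"
proof -
  define d where "d = infdist x M"
  have d0: "0 \<le> d" unfolding d_def by (rule infdist_nonneg)
  have u1: "\<exists>!b. b \<in> M \<and> dist x b = infdist x M" using uqM dx e by auto
  then obtain p where p: "p \<in> M" "dist x p = d" unfolding d_def by blast
  have pp: "proj M x = p" using proj_eq[OF u1] p d_def by simp
  have "infdist x Mh \<le> infdist p Mh + dist x p" by (rule infdist_triangle)
  also have "\<dots> \<le> \<epsilon> + d" using hM p by simp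
  finally have dxh: "infdist x Mh \<le> \<epsilon> + d" .
  then have dxh2: "infdist x Mh < \<zeta>" using dx e d_def by simp
  have u2: "\<exists>!b. b \<in> Mh \<and> dist x b = infdist x Mh" using uqMh dxh2 by auto
  then obtain q where q: "q \<in> Mh" "dist x q = infdist x Mh" by blast
  have qq: "proj Mh x = q" using proj_eq[OF u2] q by simp
  obtain p' where p': "p' \<in> M" "infdist q M = dist q p'" using infdist_attains_inf[OF clM neM] by blast
  have "infdist q M \<le> \<epsilon>" using hMh q(1) by blast
  then have qp': "dist q p' \<le> \<epsilon>" using p'(2) by simp
  have xp': "dist x p' \<le> d + 2 * \<epsilon>" using dist_triangle[of x p' q] qp' q dxh by simp
  define D where "D = 1 - (d + \<epsilon>) / \<zeta>"
  have Dpos: "0 < D" using dx z e unfolding D_def d_def by (simp add: field_simps)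
  define N where "N = norm (p' - p)"
  have ip: "(x - p) \<bullet> (p' - p) \<le> N\<^sup>2 * (d + \<epsilon>) / (2 * \<zeta>)"
  proof (cases "d = 0")
    case True
    then have "x = p" using p by simp
    then show ?thesis using z e d0 by (simp add: zero_le_divide_iff)
  next
    case False
    then have dpos: "0 < d" using d0 by simp
    define u where "u = (1 / d) *\<^sub>R (x - p)"
    have nu: "norm u = 1" using p dpos by (simp add: u_def dist_norm)
    have xeq: "x = p + d *\<^sub>R u" using dpos by (simp add: u_def)
    have hd: "infdist (p + d *\<^sub>R u) M = d"
    proof -
      have "infdist x M = d" using d_def by simp
      then show ?thesis using xeq by simp
    qed
    define T where "T = \<zeta> * d / (d + \<epsilon>)"
    have Tpos: "0 < T" using z dpos e by (simp add: T_def)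
    have "d * (d + \<epsilon>) \<le> d * \<zeta>" using dx dpos e d_def by (intro mult_left_mono) auto
    then have dT: "d \<le> T" using dpos e by (simp add: T_def field_simps)
    have Tz: "T < \<zeta>" using z dpos e by (simp add: T_def field_simps)
    have f: "2 * T * (u \<bullet> (p' - p)) \<le> N\<^sup>2"
      using federer[OF clM neM uqM p(1) nu dpos dT Tz hd p'(1)] by (simp add: N_def)
    have "(x - p) \<bullet> (p' - p) = d * (u \<bullet> (p' - p))" using xeq by simp
    also have "\<dots> \<le> d * (N\<^sup>2 / (2 * T))"
      using f Tpos dpos by (intro mult_left_mono) (auto simp: field_simps)
    also have "\<dots> = N\<^sup>2 * (d + \<epsilon>) / (2 * \<zeta>)"
      using z dpos e by (simp add: T_def field_simps)
    finally show ?thesis .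
  qed
  have sq: "(norm (x - p'))\<^sup>2 = d\<^sup>2 - 2 * ((x - p) \<bullet> (p' - p)) + N\<^sup>2"
  proof -
    have "x - p' = (x - p) - (p' - p)" by simp
    moreover have "norm (x - p) = d" using p by (simp add: dist_norm)
    ultimately show ?thesis using dot_norm_neg[of "x - p" "p' - p"] by (simp add: N_def field_simps)
  qed
  have xp'n: "norm (x - p') \<le> d + 2 * \<epsilon>" using xp' by (simp add: dist_norm)
  have nb: "(norm (x - p'))\<^sup>2 \<le> (d + 2 * \<epsilon>)\<^sup>2"
    by (rule power_mono[OF xp'n norm_ge_zero])
  have ex: "(d + 2 * \<epsilon>)\<^sup>2 = d\<^sup>2 + 4 * (d * \<epsilon> + \<epsilon>\<^sup>2)" by (simp add: power2_eq_square algebra_simps)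
  define I where "I = (x - p) \<bullet> (p' - p)"
  have sq': "(norm (x - p'))\<^sup>2 = d\<^sup>2 - 2 * I + N\<^sup>2" using sq unfolding I_def .
  have s1: "N\<^sup>2 \<le> 4 * (d * \<epsilon> + \<epsilon>\<^sup>2) + 2 * I" using nb ex sq' by linarith
  have ip': "I \<le> N\<^sup>2 * (d + \<epsilon>) / (2 * \<zeta>)" using ip unfolding I_def .
  have z2: "0 < 2 * \<zeta>" using z by simp
  have s2a: "I * (2 * \<zeta>) \<le> N\<^sup>2 * (d + \<epsilon>)" using ip' pos_le_divide_eq[OF z2] by blast
  have s2b: "I * (2 * \<zeta>) = \<zeta> * (2 * I)" by simp
  have s3a: "\<zeta> * N\<^sup>2 \<le> \<zeta> * (4 * (d * \<epsilon> + \<epsilon>\<^sup>2) + 2 * I)"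
    using mult_left_mono[OF s1, of \<zeta>] z by simp
  have s3b: "\<zeta> * (4 * (d * \<epsilon> + \<epsilon>\<^sup>2) + 2 * I) = \<zeta> * (4 * (d * \<epsilon> + \<epsilon>\<^sup>2)) + \<zeta> * (2 * I)"
    by (rule distrib_left)
  have s4: "\<zeta> * N\<^sup>2 - N\<^sup>2 * (d + \<epsilon>) \<le> \<zeta> * (4 * (d * \<epsilon> + \<epsilon>\<^sup>2))"
    using s2a s2b s3a s3b by linarith
  have s5: "N\<^sup>2 * D = (\<zeta> * N\<^sup>2 - N\<^sup>2 * (d + \<epsilon>)) / \<zeta>"
  proof -
    have "(\<zeta> * N\<^sup>2 - N\<^sup>2 * (d + \<epsilon>)) / \<zeta> = N\<^sup>2 - N\<^sup>2 * (d + \<epsilon>) / \<zeta>"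
      using z by (simp add: diff_divide_distrib)
    also have "\<dots> = N\<^sup>2 * D" unfolding D_def by (simp add: right_diff_distrib)
    finally show ?thesis by simp
  qed
  have s6: "(\<zeta> * N\<^sup>2 - N\<^sup>2 * (d + \<epsilon>)) / \<zeta> \<le> (\<zeta> * (4 * (d * \<epsilon> + \<epsilon>\<^sup>2))) / \<zeta>"
    by (rule divide_right_mono[OF s4]) (use z in simp)
  have s6b: "(\<zeta> * (4 * (d * \<epsilon> + \<epsilon>\<^sup>2))) / \<zeta> = 4 * (d * \<epsilon> + \<epsilon>\<^sup>2)"
    using z by simp
  have key: "N\<^sup>2 * D \<le> 4 * (d * \<epsilon> + \<epsilon>\<^sup>2)"
    using s5 s6 s6b by linarith
  define K where "K = (d * \<epsilon> + \<epsilon>\<^sup>2) / D"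
  have K0: "0 \<le> K" using Dpos d0 e by (simp add: K_def)
  have s7: "N\<^sup>2 \<le> 4 * K" unfolding K_def using key Dpos by (simp add: pos_le_divide_eq)
  have s8: "(2 * sqrt K)\<^sup>2 = 4 * K" using K0 by (simp add: power_mult_distrib)
  have NN: "N\<^sup>2 \<le> (2 * sqrt K)\<^sup>2" using s7 s8 by simp
  have NK: "N \<le> 2 * sqrt K"
  proof (rule power2_le_imp_le)
    show "N\<^sup>2 \<le> (2 * sqrt K)\<^sup>2" by (rule NN)
    show "0 \<le> 2 * sqrt K" using K0 by simp
  qed
  have pq: "proj M x - proj Mh x = (p - p') + (p' - q)" using pp qq by simp
  have t1: "norm (proj M x - proj Mh x) \<le> norm (p - p') + norm (p' - q)"
    unfolding pq by (rule norm_triangle_ineq)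
  have t2: "norm (p - p') = N" unfolding N_def by (rule norm_minus_commute)
  have t3: "norm (p' - q) \<le> \<epsilon>" using qp' by (simp add: dist_norm norm_minus_commute[of p' q])
  have t4: "norm (proj M x - proj Mh x) \<le> \<epsilon> + 2 * sqrt K" using t1 t2 t3 NK by linarith
  have t5: "K = (infdist x M * \<epsilon> + \<epsilon>\<^sup>2) / (1 - (infdist x M + \<epsilon>) / \<zeta>)"
    unfolding K_def D_def d_def ..
  show ?thesis using dxh2 t4 unfolding t5 by simp
qed

theorem lemmaE3:
  fixes M Mh :: "'a::euclidean_space set" and \<zeta> \<epsilon> r :: real
  assumes "embedded_submanifold M" and "closed M" and "M \<noteq> {}"
      and "embedded_submanifold Mh" and "closed Mh" and "Mh \<noteq> {}"
      and "\<zeta> > 0" and "reach M \<ge> ereal \<zeta>" and "reach Mh \<ge> ereal \<zeta>"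
      and "hausdorff_dist M Mh \<le> ereal \<epsilon>"
      and "0 < \<epsilon>" and "\<epsilon> < \<zeta> / 4"
      and "0 < r" and "r < \<zeta> - 2 * \<epsilon>"
  shows "(\<forall>x \<in> tube r M.
            x \<in> tube \<zeta> M \<and> x \<in> tube \<zeta> Mh \<and>
            (\<exists>!p. p \<in> M \<and> dist x p = infdist x M) \<and>
            (\<exists>!p. p \<in> Mh \<and> dist x p = infdist x Mh) \<and>
            norm (proj M x - proj Mh x) \<le>
              \<epsilon> + 2 * sqrt ((infdist x M * \<epsilon> + \<epsilon>\<^sup>2) / (1 - (infdist x M + \<epsilon>) / \<zeta>)))
       \<and> (SUP x \<in> tube r M. norm (proj M x - proj Mh x))
            \<le> \<epsilon> + 2 * sqrt ((r * \<epsilon> + \<epsilon>\<^sup>2) / (1 - (r + \<epsilon>) / \<zeta>))"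
proof -
  have uqM: "\<forall>w. infdist w M < \<zeta> \<longrightarrow> (\<exists>!b. b \<in> M \<and> dist w b = infdist w M)"
    using reach_unique[OF assms(8)] by blast
  have uqMh: "\<forall>w. infdist w Mh < \<zeta> \<longrightarrow> (\<exists>!b. b \<in> Mh \<and> dist w b = infdist w Mh)"
    using reach_unique[OF assms(9)] by blast
  have hM: "\<forall>a\<in>M. infdist a Mh \<le> \<epsilon>"
  proof
    fix a assume a: "a \<in> M"
    have "ereal (infdist a Mh) \<le> (SUP a\<in>M. ereal (infdist a Mh))" using a by (rule SUP_upper)
    also have "\<dots> \<le> hausdorff_dist M Mh" unfolding hausdorff_dist_def by (rule max.cobounded1)
    also have "\<dots> \<le> ereal \<epsilon>" by (rule assms(10))
    finally show "infdist a Mh \<le> \<epsilon>" by simp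
  qed
  have hMh: "\<forall>b\<in>Mh. infdist b M \<le> \<epsilon>"
  proof
    fix a assume a: "a \<in> Mh"
    have "ereal (infdist a M) \<le> (SUP a\<in>Mh. ereal (infdist a M))" using a by (rule SUP_upper)
    also have "\<dots> \<le> hausdorff_dist M Mh" unfolding hausdorff_dist_def by (rule max.cobounded2)
    also have "\<dots> \<le> ereal \<epsilon>" by (rule assms(10))
    finally show "infdist a M \<le> \<epsilon>" by simp
  qed
  have pw: "x \<in> tube \<zeta> M \<and> x \<in> tube \<zeta> Mh \<and>
            (\<exists>!p. p \<in> M \<and> dist x p = infdist x M) \<and>
            (\<exists>!p. p \<in> Mh \<and> dist x p = infdist x Mh) \<and>
            norm (proj M x - proj Mh x) \<le>
              \<epsilon> + 2 * sqrt ((infdist x M * \<epsilon> + \<epsilon>\<^sup>2) / (1 - (infdist x M + \<epsilon>) / \<zeta>))"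
    if x: "x \<in> tube r M" for x
  proof -
    have xr: "infdist x M < r" using x by (simp add: tube_def)
    have dx: "infdist x M + 2 * \<epsilon> < \<zeta>" using xr assms(14) by simp
    have P: "infdist x Mh < \<zeta> \<and> norm (proj M x - proj Mh x) \<le>
     \<epsilon> + 2 * sqrt ((infdist x M * \<epsilon> + \<epsilon>\<^sup>2) / (1 - (infdist x M + \<epsilon>) / \<zeta>))"
      by (rule pointwise[OF assms(2,3,5,6,7) uqM uqMh hM hMh assms(11) dx])
    have xz: "infdist x M < \<zeta>" using dx assms(11) by simp
    show ?thesis using P xz uqM uqMh by (simp add: tube_def)
  qed
  have ne: "tube r M \<noteq> {}"
  proof -
    obtain a where "a \<in> M" using assms(3) by blast
    then have "a \<in> tube r M" using assms(13) by (simp add: tube_def)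
    then show ?thesis by blast
  qed
  have bnd: "norm (proj M x - proj Mh x) \<le> \<epsilon> + 2 * sqrt ((r * \<epsilon> + \<epsilon>\<^sup>2) / (1 - (r + \<epsilon>) / \<zeta>))"
    if x: "x \<in> tube r M" for x
  proof -
    define d where "d = infdist x M"
    have d0: "0 \<le> d" unfolding d_def by (rule infdist_nonneg)
    have dr: "d < r" using x by (simp add: tube_def d_def)
    have den: "0 < 1 - (r + \<epsilon>) / \<zeta>" using assms(7,11,14) by (simp add: field_simps)
    have den2: "1 - (r + \<epsilon>) / \<zeta> \<le> 1 - (d + \<epsilon>) / \<zeta>"
      using dr assms(7) by (simp add: divide_right_mono)
    have num: "d * \<epsilon> + \<epsilon>\<^sup>2 \<le> r * \<epsilon> + \<epsilon>\<^sup>2" using dr assms(11) by simp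
    have "(d * \<epsilon> + \<epsilon>\<^sup>2) / (1 - (d + \<epsilon>) / \<zeta>) \<le> (r * \<epsilon> + \<epsilon>\<^sup>2) / (1 - (r + \<epsilon>) / \<zeta>)"
      by (rule frac_le) (use num den den2 assms(11,13) in auto)
    then have "sqrt ((d * \<epsilon> + \<epsilon>\<^sup>2) / (1 - (d + \<epsilon>) / \<zeta>)) \<le> sqrt ((r * \<epsilon> + \<epsilon>\<^sup>2) / (1 - (r + \<epsilon>) / \<zeta>))"
      by (rule real_sqrt_le_mono)
    then show ?thesis using pw[OF x] unfolding d_def by linarith
  qed
  have "(SUP x \<in> tube r M. norm (proj M x - proj Mh x))
            \<le> \<epsilon> + 2 * sqrt ((r * \<epsilon> + \<epsilon>\<^sup>2) / (1 - (r + \<epsilon>) / \<zeta>))"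
    by (rule cSUP_least[OF ne bnd])
  then show ?thesis using pw by blast
qed

end
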